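(* Let $A$ be a finite alphabet and $L\subseteq A^*$. If $L\subseteq\bigcup_iP_i\subseteq{\downarrow}L$ for a family $(P_i)_i$ of D-products of length at most $\ell$, then $h({\downarrow}L)\leq\ell+1$ and $h({\downarrow}_<L)\leq\ell+1$.
   Context: A D-product is a regular expression $E_1E_2\cdots E_\ell$ where each $E_i$ is either $B^*$ for some subalphabet $B\subseteq A$ or a single letter $a\in A$; $\ell$ is its length, and it also denotes its language. $u\sqsubseteq v$ (subword) means $u=a_1\cdots a_n$ with letters $a_i$ and $v=v_0a_1v_1\cdots a_nv_n$; $u\sqsubset v$ means $u\sqsubseteq v$, $u\ne v$. ${\downarrow}L=\{v~|~\exists u\in L: v\sqsubseteq u\}$, ${\downarrow}_<L=\{v~|~\exists u\in L:v\sqsubset u\}$. $u\sim_n v$ iff $u,v$ have the same subwords of length at most $n$; $L$ is $n$-PT if it is a union of $\sim_n$-classes, and $h(L)$ is the least such $n$. *)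

theory Defs
  imports Main "HOL-Library.Sublist"
begin

text \<open>Words over the alphabet are lists over a finite type 'a (the alphabet A = UNIV).
  Subword order: the library's scattered subsequence relation subseq.\<close>

datatype 'a ditem = Star "'a set" | Letter 'a

type_synonym 'a dprod = "'a ditem list"

fun dlang :: "'a dprod \<Rightarrow> 'a list set" where
  "dlang [] = {[]}"
| "dlang (Star B # p) = {u @ v | u v. set u \<subseteq> B \<and> v \<in> dlang p}"
| "dlang (Letter a # p) = {a # v | v. v \<in> dlang p}"

definition down :: "'a list set \<Rightarrow> 'a list set" where
  "down L = {v. \<exists>u\<in>L. subseq v u}"

definition down_strict :: "'a list set \<Rightarrow> 'a list set" where
  "down_strict L = {v. \<exists>u\<in>L. strict_subseq v u}"

definition simon_eq :: "nat \<Rightarrow> 'a list \<Rightarrow> 'a list \<Rightarrow> bool" where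
  "simon_eq n u v \<longleftrightarrow>
     {w. subseq w u \<and> length w \<le> n} = {w. subseq w v \<and> length w \<le> n}"

definition is_nPT :: "nat \<Rightarrow> 'a list set \<Rightarrow> bool" where
  "is_nPT n L \<longleftrightarrow> (\<forall>u v. simon_eq n u v \<longrightarrow> (u \<in> L \<longleftrightarrow> v \<in> L))"

definition pt_height :: "'a list set \<Rightarrow> nat" where
  "pt_height L = (LEAST n. is_nPT n L)"

end

theory Submission
  imports Defs
begin

lemma dlang_Star_I: "set u \<subseteq> B \<Longrightarrow> v \<in> dlang p \<Longrightarrow> u @ v \<in> dlang (Star B # p)"
  by auto

lemma dlang_nonempty: "\<exists>w. w \<in> dlang p"
proof (induction p)
  case Nil then show ?case by auto
next
  case (Cons x p)
  then obtain w where "w \<in> dlang p" by auto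
  show ?case
  proof (cases x)
    case (Star B)
    have "[] @ w \<in> dlang (Star B # p)" using \<open>w \<in> dlang p\<close> by (intro dlang_Star_I) auto
    then show ?thesis using Star by blast
  next
    case (Letter a)
    have "a # w \<in> dlang (Letter a # p)" using \<open>w \<in> dlang p\<close> by auto
    then show ?thesis using Letter by blast
  qed
qed

lemma down_Nil_mem: "[] \<in> down (dlang p)"
  using dlang_nonempty[of p] unfolding down_def by auto

lemma down_closed: "u \<in> down X \<Longrightarrow> subseq v u \<Longrightarrow> v \<in> down X"
  unfolding down_def using subseq_order.trans by blast

lemma down_dlang_Nil: "u \<in> down (dlang []) \<longleftrightarrow> u = []"
  unfolding down_def by auto

lemma subseq_dropWhile_aux:
  "subseq u (x @ v) \<Longrightarrow> \<forall>y\<in>set x. P y \<Longrightarrow> subseq (dropWhile P u) v"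
proof (induction x arbitrary: u)
  case Nil
  have "subseq (dropWhile P u) u" by (rule suffix_imp_subseq[OF suffix_dropWhile])
  then show ?case using Nil subseq_order.trans by auto
next
  case (Cons b x)
  show ?case
  proof (cases u)
    case Nil then show ?thesis by simp
  next
    case (Cons c u')
    show ?thesis
    proof (cases "c = b")
      case True
      with Cons.prems \<open>u = c # u'\<close> have "subseq u' (x @ v)" "P c" by auto
      then show ?thesis using Cons.IH Cons.prems \<open>u = c # u'\<close> by auto
    next
      case False
      with Cons.prems \<open>u = c # u'\<close> have "subseq u (x @ v)" by auto
      then show ?thesis using Cons.IH Cons.prems by auto
    qed
  qed
qed

lemma down_dlang_Star:
  "u \<in> down (dlang (Star B # p)) \<longleftrightarrow> dropWhile (\<lambda>x. x \<in> B) u \<in> down (dlang p)"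
proof
  assume "u \<in> down (dlang (Star B # p))"
  then obtain x v where "subseq u (x @ v)" "set x \<subseteq> B" "v \<in> dlang p"
    unfolding down_def by auto
  then have "subseq (dropWhile (\<lambda>x. x \<in> B) u) v"
    by (intro subseq_dropWhile_aux[of _ x]) auto
  then show "dropWhile (\<lambda>x. x \<in> B) u \<in> down (dlang p)"
    using \<open>v \<in> dlang p\<close> unfolding down_def by auto
next
  assume "dropWhile (\<lambda>x. x \<in> B) u \<in> down (dlang p)"
  then obtain v where v: "v \<in> dlang p" "subseq (dropWhile (\<lambda>x. x \<in> B) u) v"
    unfolding down_def by auto
  have "set (takeWhile (\<lambda>x. x \<in> B) u) \<subseteq> B"
    by (auto dest: set_takeWhileD)
  then have "takeWhile (\<lambda>x. x \<in> B) u @ v \<in> dlang (Star B # p)" using v by auto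
  moreover have "subseq u (takeWhile (\<lambda>x. x \<in> B) u @ v)"
    using v(2) by (metis subseq_append' takeWhile_dropWhile_id)
  ultimately show "u \<in> down (dlang (Star B # p))" unfolding down_def by auto
qed

lemma down_dlang_Letter:
  "u \<in> down (dlang (Letter a # p)) \<longleftrightarrow>
     (case u of [] \<Rightarrow> True | c # u' \<Rightarrow> (if c = a then u' \<in> down (dlang p) else u \<in> down (dlang p)))"
proof
  assume "u \<in> down (dlang (Letter a # p))"
  then obtain v where v: "v \<in> dlang p" "subseq u (a # v)" unfolding down_def by auto
  show "case u of [] \<Rightarrow> True | c # u' \<Rightarrow> (if c = a then u' \<in> down (dlang p) else u \<in> down (dlang p))"
  proof (cases u)
    case Nil then show ?thesis by simp
  next
    case (Cons c u')
    show ?thesis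
    proof (cases "c = a")
      case True
      then have "subseq u' v" using v Cons by auto
      then show ?thesis using True Cons v unfolding down_def by auto
    next
      case False
      then have "subseq u v" using v Cons by auto
      then show ?thesis using False Cons v unfolding down_def by auto
    qed
  qed
next
  assume H: "case u of [] \<Rightarrow> True | c # u' \<Rightarrow> (if c = a then u' \<in> down (dlang p) else u \<in> down (dlang p))"
  show "u \<in> down (dlang (Letter a # p))"
  proof (cases u)
    case Nil
    obtain w where "w \<in> dlang p" using dlang_nonempty by auto
    then show ?thesis using Nil unfolding down_def by force
  next
    case (Cons c u')
    show ?thesis
    proof (cases "c = a")
      case True
      then obtain v where "v \<in> dlang p" "subseq u' v" using H Cons unfolding down_def by auto
      then show ?thesis using True Cons unfolding down_def by force
    next
      case False
      then obtain v where "v \<in> dlang p" "subseq u v" using H Cons unfolding down_def by auto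
      then show ?thesis unfolding down_def by force
    qed
  qed
qed

lemma witness:
  "u \<notin> down (dlang p) \<Longrightarrow>
     \<exists>m. subseq m u \<and> length m \<le> length p + 1 \<and> m \<notin> down (dlang p)"
proof (induction p arbitrary: u)
  case Nil
  then obtain c u' where u: "u = c # u'" using down_dlang_Nil by (cases u) auto
  have "[c] \<notin> down (dlang [])" using down_dlang_Nil by blast
  then show ?case by (intro exI[of _ "[c]"]) (auto simp: u)
next
  case (Cons it p)
  show ?case
  proof (cases it)
    case (Star B)
    let ?y = "dropWhile (\<lambda>x. x \<in> B) u"
    have y: "?y \<notin> down (dlang p)" using Cons.prems Star down_dlang_Star by blast
    then obtain c y' where cy: "?y = c # y'" using down_Nil_mem by (cases ?y) auto
    have cB: "c \<notin> B" using cy by (metis dropWhile_eq_Cons_conv)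
    have ysub: "subseq ?y u" by (rule suffix_imp_subseq[OF suffix_dropWhile])
    obtain m where m: "subseq m ?y" "length m \<le> length p + 1" "m \<notin> down (dlang p)"
      using Cons.IH y by blast
    have "\<exists>m'. subseq m' ?y \<and> length m' \<le> length p + 2 \<and> m' \<notin> down (dlang p)
               \<and> hd m' = c \<and> m' \<noteq> []"
    proof (cases "subseq m y'")
      case True
      have "c # m \<notin> down (dlang p)" using m(3) down_closed[of "c # m" _ m] list_emb_Cons[OF subseq_order.refl[of m], of c]
        by blast
      then show ?thesis using True m cy
        by (intro exI[of _ "c # m"]) auto
    next
      case False
      then obtain m0 where "m = c # m0" using m(1) cy
        by (cases m) (auto split: if_splits)
      then show ?thesis using m by (intro exI[of _ m]) auto
    qed
    then obtain m' where m': "subseq m' ?y" "length m' \<le> length p + 2" "m' \<notin> down (dlang p)"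
      "hd m' = c" "m' \<noteq> []" by blast
    have "dropWhile (\<lambda>x. x \<in> B) m' = m'" using m'(4,5) cB by (cases m') auto
    then have "m' \<notin> down (dlang (Star B # p))" using m'(3) down_dlang_Star by metis
    then show ?thesis using m' ysub subseq_order.trans Star by fastforce
  next
    case (Letter a)
    obtain c u' where u: "u = c # u'" using Cons.prems down_Nil_mem[of "it # p"]
      by (metis neq_Nil_conv)
    show ?thesis
    proof (cases "c = a")
      case True
      then have "u' \<notin> down (dlang p)" using Cons.prems unfolding Letter u down_dlang_Letter by simp
      then obtain m where m: "subseq m u'" "length m \<le> length p + 1" "m \<notin> down (dlang p)"
        using Cons.IH by blast
      have "a # m \<notin> down (dlang (Letter a # p))" using m(3) unfolding down_dlang_Letter by simp
      then show ?thesis using m True u Letter by (intro exI[of _ "a # m"]) auto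
    next
      case False
      then have ud: "u \<notin> down (dlang p)" using Cons.prems unfolding Letter u down_dlang_Letter by simp
      then obtain m where m: "subseq m u" "length m \<le> length p + 1" "m \<notin> down (dlang p)"
        using Cons.IH by blast
      show ?thesis
      proof (cases "subseq m u'")
        case True
        have "c # m \<notin> down (dlang p)" using m(3) down_closed
          by (metis list_emb_Cons subseq_order.refl)
        then have "c # m \<notin> down (dlang (Letter a # p))" using False unfolding down_dlang_Letter by simp
        then show ?thesis using True m u Letter by (intro exI[of _ "c # m"]) auto
      next
        case F2: False
        then obtain m0 where m0: "m = c # m0" using m(1) u
          by (cases m) (auto split: if_splits)
        then have "m \<notin> down (dlang (Letter a # p))" using False m(3) unfolding down_dlang_Letter by (simp add: m0)
        then show ?thesis using m Letter by (intro exI[of _ m]) auto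
      qed
    qed
  qed
qed

lemma simon_sym: "simon_eq n u v \<Longrightarrow> simon_eq n v u"
  unfolding simon_eq_def by auto

lemma simon_subseq: "simon_eq n u v \<Longrightarrow> subseq m u \<Longrightarrow> length m \<le> n \<Longrightarrow> subseq m v"
  unfolding simon_eq_def by blast

lemma down_dlang_PT:
  assumes "length p + 1 \<le> n" "simon_eq n u v" "v \<in> down (dlang p)"
  shows "u \<in> down (dlang p)"
proof (rule ccontr)
  assume "u \<notin> down (dlang p)"
  then obtain m where m: "subseq m u" "length m \<le> length p + 1" "m \<notin> down (dlang p)"
    using witness by blast
  then have "subseq m v" using simon_subseq assms by fastforce
  then show False using m(3) assms(3) down_closed by blast
qed

lemma simon_short: assumes "simon_eq n u v" "length u < n" shows "u = v"
proof -
  have uv: "subseq u v" using simon_subseq[OF assms(1)] assms(2) by auto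
  have "length v \<le> length u"
  proof (rule ccontr)
    assume "\<not> ?thesis"
    then have "length (take (length u + 1) v) = length u + 1" by auto
    moreover have "subseq (take (length u + 1) v) v"
      by (rule prefix_imp_subseq) (metis take_is_prefix)
    ultimately have "subseq (take (length u + 1) v) u"
      using simon_subseq[OF simon_sym[OF assms(1)], of "take (length u + 1) v"] assms(2) by simp
    then have "length (take (length u + 1) v) \<le> length u" by (rule list_emb_length)
    then show False using \<open>length (take (length u + 1) v) = length u + 1\<close> by simp
  qed
  then show ?thesis using uv subseq_same_length list_emb_length le_antisym by metis
qed

lemma simon_long: assumes "simon_eq n u v" "n \<le> length u" shows "n \<le> length v"
proof -
  have "subseq (take n u) u" by (rule prefix_imp_subseq) (metis take_is_prefix)
  then have "subseq (take n u) v" using simon_subseq[OF assms(1)] by auto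
  then show ?thesis using list_emb_length assms(2) by fastforce
qed

lemma pump: "w \<in> dlang p \<Longrightarrow> length p < length w \<Longrightarrow> \<exists>w'\<in>dlang p. strict_subseq w w'"
proof (induction p arbitrary: w)
  case Nil then show ?case by auto
next
  case (Cons it p)
  show ?case
  proof (cases it)
    case (Star B)
    then obtain x v where w: "w = x @ v" "set x \<subseteq> B" "v \<in> dlang p" using Cons.prems by auto
    show ?thesis
    proof (cases x)
      case Nil
      have "length p < length v" using Cons.prems w Nil Star by simp
      then obtain v' where "v' \<in> dlang p" "strict_subseq v v'" using Cons.IH w by blast
      moreover have "[] @ v' \<in> dlang (Star B # p)" using calculation by (intro dlang_Star_I) auto
      ultimately show ?thesis using w Nil Star by (metis append_Nil)
    next
      case (Cons b x')
      have "(b # x) @ v \<in> dlang (Star B # p)" using w Cons by (intro dlang_Star_I) auto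
      moreover have "strict_subseq w ((b # x) @ v)"
        unfolding strict_subseq_def using w by auto
      ultimately show ?thesis using Star by blast
    qed
  next
    case (Letter a)
    then obtain v where w: "w = a # v" "v \<in> dlang p" using Cons.prems by auto
    then obtain v' where "v' \<in> dlang p" "strict_subseq v v'" using Cons by auto
    then show ?thesis using w Letter unfolding strict_subseq_def by force
  qed
qed

lemma down_strict_dlang_PT:
  assumes "length p + 1 \<le> n" "simon_eq n u v" "u \<in> down_strict (dlang p)"
  shows "v \<in> down_strict (dlang p)"
proof (cases "length u < n")
  case True then show ?thesis using simon_short assms by metis
next
  case False
  have "u \<in> down (dlang p)" using assms(3) unfolding down_def down_strict_def strict_subseq_def by auto
  then have "v \<in> down (dlang p)" using down_dlang_PT[OF assms(1) simon_sym[OF assms(2)]] by auto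
  then obtain w where w: "w \<in> dlang p" "subseq v w" unfolding down_def by auto
  have lv: "n \<le> length v" using simon_long[OF assms(2)] False by auto
  show ?thesis
  proof (cases "v = w")
    case True
    then obtain w' where "w' \<in> dlang p" "strict_subseq v w'" using pump w lv assms(1) by fastforce
    then show ?thesis unfolding down_strict_def by auto
  next
    case False
    then show ?thesis using w unfolding down_strict_def strict_subseq_def by auto
  qed
qed

theorem corollary13:
  fixes L :: "('a::finite) list set" and P :: "'a dprod set" and l :: nat
  assumes "\<forall>p\<in>P. length p \<le> l"
    and "L \<subseteq> (\<Union>p\<in>P. dlang p)"
    and "(\<Union>p\<in>P. dlang p) \<subseteq> down L"
  shows "(\<exists>n. is_nPT n (down L)) \<and> pt_height (down L) \<le> l + 1
       \<and> (\<exists>n. is_nPT n (down_strict L)) \<and> pt_height (down_strict L) \<le> l + 1"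
proof -
  have eq1: "down L = (\<Union>p\<in>P. down (dlang p))"
  proof
    show "down L \<subseteq> (\<Union>p\<in>P. down (dlang p))" using assms(2) unfolding down_def by blast
    show "(\<Union>p\<in>P. down (dlang p)) \<subseteq> down L"
      using assms(3) unfolding down_def using subseq_order.trans by blast
  qed
  have eq2: "down_strict L = (\<Union>p\<in>P. down_strict (dlang p))"
  proof
    show "down_strict L \<subseteq> (\<Union>p\<in>P. down_strict (dlang p))" using assms(2) unfolding down_strict_def by blast
    show "(\<Union>p\<in>P. down_strict (dlang p)) \<subseteq> down_strict L"
      using assms(3) unfolding down_def down_strict_def using subseq_order.less_le_trans by blast
  qed
  have pt1: "is_nPT (l+1) (down L)"
    unfolding is_nPT_def eq1
  proof (intro allI impI)
    fix u v :: "'a list" assume uv: "simon_eq (l+1) u v"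
    show "(u \<in> (\<Union>p\<in>P. down (dlang p))) = (v \<in> (\<Union>p\<in>P. down (dlang p)))"
      using down_dlang_PT[OF _ uv] down_dlang_PT[OF _ simon_sym[OF uv]] assms(1)
      by (metis (no_types, lifting) UN_iff add_le_mono1)
  qed
  have pt2: "is_nPT (l+1) (down_strict L)"
    unfolding is_nPT_def eq2
  proof (intro allI impI)
    fix u v :: "'a list" assume uv: "simon_eq (l+1) u v"
    show "(u \<in> (\<Union>p\<in>P. down_strict (dlang p))) = (v \<in> (\<Union>p\<in>P. down_strict (dlang p)))"
      using down_strict_dlang_PT[OF _ uv] down_strict_dlang_PT[OF _ simon_sym[OF uv]] assms(1)
      by (metis (no_types, lifting) UN_iff add_le_mono1)
  qed
  show ?thesis using pt1 pt2 unfolding pt_height_def by (auto intro: Least_le)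
qed

end
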